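(* Let $B$ be a nonzero real vector space, $\lfloor\cdot,\cdot\rfloor$ a symmetric bilinear form on $B$, $q(b):=\tfrac12\lfloor b,b\rfloor$, and let $A$ be a maximally $q$--positive subset of $B$. Then $\Phi_A$ is a BC--function and ${\cal P}_q(\Phi_A^@)={\cal P}_q(\Phi_A)=A$.
   Context: A subset $A\subset B$ is $q$--positive if $A\ne\emptyset$ and $q(b-c)\ge 0$ for all $b,c\in A$; it is maximally $q$--positive if it is $q$--positive and not properly contained in another $q$--positive set. $\Phi_A(b):=\sup_{a\in A}\big[\lfloor a,b\rfloor-q(a)\big]$ for $b\in B$. For a proper convex $f\colon B\to\,]{-}\infty,\infty]$, $f^@(c):=\sup_{b\in B}[\lfloor b,c\rfloor-f(b)]$. A BC--function is a proper convex $f$ with $f^@(b)\ge f(b)\ge q(b)$ for all $b\in B$. For $h\ge q$, ${\cal P}_q(h):=\{b\colon h(b)=q(b)\}$. *)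

theory Defs
  imports "HOL-Analysis.Analysis" "HOL-Library.Extended_Real"
begin

definition qf :: "('b::real_vector \<Rightarrow> 'b \<Rightarrow> real) \<Rightarrow> 'b \<Rightarrow> real" where
  "qf L b = L b b / 2"

definition q_positive :: "('b::real_vector \<Rightarrow> 'b \<Rightarrow> real) \<Rightarrow> 'b set \<Rightarrow> bool" where
  "q_positive L A \<longleftrightarrow> A \<noteq> {} \<and> (\<forall>b\<in>A. \<forall>c\<in>A. qf L (b - c) \<ge> 0)"

definition max_q_positive :: "('b::real_vector \<Rightarrow> 'b \<Rightarrow> real) \<Rightarrow> 'b set \<Rightarrow> bool" where
  "max_q_positive L A \<longleftrightarrow> q_positive L A \<and> (\<forall>A'. q_positive L A' \<and> A \<subseteq> A' \<longrightarrow> A' = A)"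

definition PhiA :: "('b::real_vector \<Rightarrow> 'b \<Rightarrow> real) \<Rightarrow> 'b set \<Rightarrow> 'b \<Rightarrow> ereal" where
  "PhiA L A b = (SUP a\<in>A. ereal (L a b - qf L a))"

definition proper_convex :: "('b::real_vector \<Rightarrow> ereal) \<Rightarrow> bool" where
  "proper_convex f \<longleftrightarrow> (\<forall>b. f b \<noteq> -\<infinity>) \<and> (\<exists>b. f b \<noteq> \<infinity>) \<and>
     (\<forall>x y t. 0 < t \<and> t < 1 \<longrightarrow>
        f ((1 - t) *\<^sub>R x + t *\<^sub>R y) \<le> ereal (1 - t) * f x + ereal t * f y)"

definition fenchel_L :: "('b::real_vector \<Rightarrow> 'b \<Rightarrow> real) \<Rightarrow> ('b \<Rightarrow> ereal) \<Rightarrow> 'b \<Rightarrow> ereal" where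
  "fenchel_L L f c = (SUP b. ereal (L b c) - f b)"

definition BC_function :: "('b::real_vector \<Rightarrow> 'b \<Rightarrow> real) \<Rightarrow> ('b \<Rightarrow> ereal) \<Rightarrow> bool" where
  "BC_function L f \<longleftrightarrow> proper_convex f \<and>
     (\<forall>b. fenchel_L L f b \<ge> f b \<and> f b \<ge> ereal (qf L b))"

definition Pq :: "('b::real_vector \<Rightarrow> 'b \<Rightarrow> real) \<Rightarrow> ('b \<Rightarrow> ereal) \<Rightarrow> 'b set" where
  "Pq L h = {b. h b = ereal (qf L b)}"

end

theory Submission
  imports Defs
begin

lemma bil_facts:
  assumes bil: "bilinear L"
  shows "L (x - y) z = L x z - L y z" "L z (x - y) = L z x - L z y"
    "L (x + y) z = L x z + L y z" "L z (x + y) = L z x + L z y"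
    "L (r *\<^sub>R x) z = r * L x z" "L z (r *\<^sub>R x) = r * L z x"
proof -
  have l1: "linear (\<lambda>x. L x z)" and l2: "linear (L z)"
    using bil unfolding bilinear_def by auto
  show "L (x - y) z = L x z - L y z" using linear_diff[OF l1] by simp
  show "L z (x - y) = L z x - L z y" using linear_diff[OF l2] by simp
  show "L (x + y) z = L x z + L y z" using linear_add[OF l1] by simp
  show "L z (x + y) = L z x + L z y" using linear_add[OF l2] by simp
  show "L (r *\<^sub>R x) z = r * L x z" using linear_scale[OF l1] by simp
  show "L z (r *\<^sub>R x) = r * L z x" using linear_scale[OF l2] by simp
qed

lemma qf_diff:
  assumes bil: "bilinear L" and sym: "\<forall>b c. L b c = L c b"
  shows "qf L (b - c) = qf L b + qf L c - L b c"
proof -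
  have "L (b - c) (b - c) = L b b - L b c - (L c b - L c c)"
    by (simp only: bil_facts[OF bil])
  thus ?thesis using sym unfolding qf_def by (simp add: field_simps)
qed

lemma Phi_ge:
  assumes "a \<in> A" shows "ereal (L a b - qf L a) \<le> PhiA L A b"
  unfolding PhiA_def using assms by (rule SUP_upper)

theorem theorem3p11:
  fixes L :: "'b::real_vector \<Rightarrow> 'b \<Rightarrow> real" and A :: "'b set"
  assumes nonzero: "\<exists>b::'b. b \<noteq> 0"
    and bil: "bilinear L"
    and sym: "\<forall>b c. L b c = L c b"
    and maxA: "max_q_positive L A"
  shows "BC_function L (PhiA L A)
    \<and> Pq L (fenchel_L L (PhiA L A)) = Pq L (PhiA L A)
    \<and> Pq L (PhiA L A) = A"
proof -
  let ?P = "PhiA L A"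
  have qp: "q_positive L A" using maxA unfolding max_q_positive_def by blast
  hence ne: "A \<noteq> {}" and pos: "\<And>b c. b \<in> A \<Longrightarrow> c \<in> A \<Longrightarrow> qf L (b - c) \<ge> 0"
    unfolding q_positive_def by auto
  have qsym: "qf L (b - c) = qf L (c - b)" for b c
    using qf_diff[OF bil sym] sym by simp
  have inA: "?P b = ereal (qf L b)" if "b \<in> A" for b
  proof (rule antisym)
    show "?P b \<le> ereal (qf L b)" unfolding PhiA_def
    proof (rule SUP_least)
      fix a assume "a \<in> A"
      have "0 \<le> qf L (a - b)" using pos[OF \<open>a\<in>A\<close> that] .
      thus "ereal (L a b - qf L a) \<le> ereal (qf L b)"
        using qf_diff[OF bil sym, of a b] by simp
    qed
    have "ereal (L b b - qf L b) = ereal (qf L b)" unfolding qf_def by simp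
    thus "ereal (qf L b) \<le> ?P b" using Phi_ge[OF that, of L b] by simp
  qed
  have notA: "?P b > ereal (qf L b)" if "b \<notin> A" for b
  proof -
    have "\<not> q_positive L (insert b A)"
      using maxA that unfolding max_q_positive_def by blast
    then obtain x y where xy: "x \<in> insert b A" "y \<in> insert b A" "qf L (x - y) < 0"
      unfolding q_positive_def by force
    have "\<exists>a\<in>A. qf L (a - b) < 0"
    proof -
      have "x \<noteq> b \<or> y \<noteq> b" using xy(3) unfolding qf_def
        using bil_facts[OF bil] by auto
      moreover have "\<not> (x \<in> A \<and> y \<in> A)" using xy(3) pos by force
      ultimately show ?thesis using xy qsym by auto
    qed
    then obtain a where a: "a \<in> A" "qf L (a - b) < 0" by blast
    have "ereal (qf L b) < ereal (L a b - qf L a)"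
      using a(2) qf_diff[OF bil sym, of a b] by simp
    also have "\<dots> \<le> ?P b" by (rule Phi_ge[OF a(1)])
    finally show ?thesis .
  qed
  have geq: "?P b \<ge> ereal (qf L b)" for b
    using inA notA by (cases "b \<in> A") (auto intro: less_imp_le)
  have PqA: "Pq L ?P = A"
    unfolding Pq_def using inA notA by force
  obtain a0 where a0: "a0 \<in> A" using ne by blast
  have conv: "?P ((1 - t) *\<^sub>R x + t *\<^sub>R y) \<le> ereal (1 - t) * ?P x + ereal t * ?P y"
    if "0 < t" "t < 1" for x y t
    unfolding PhiA_def[of L A "(1 - t) *\<^sub>R x + t *\<^sub>R y"]
  proof (rule SUP_least)
    fix a assume a: "a \<in> A"
    have "L a ((1 - t) *\<^sub>R x + t *\<^sub>R y) - qf L a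
        = (1 - t) * (L a x - qf L a) + t * (L a y - qf L a)"
      by (simp only: bil_facts[OF bil]) (simp add: algebra_simps)
    hence "ereal (L a ((1 - t) *\<^sub>R x + t *\<^sub>R y) - qf L a)
        = ereal (1 - t) * ereal (L a x - qf L a) + ereal t * ereal (L a y - qf L a)"
      by simp
    also have "\<dots> \<le> ereal (1 - t) * ?P x + ereal t * ?P y"
    proof (rule add_mono)
      show "ereal (1 - t) * ereal (L a x - qf L a) \<le> ereal (1 - t) * ?P x"
        by (rule ereal_mult_left_mono[OF Phi_ge[OF a]]) (use that in simp)
      show "ereal t * ereal (L a y - qf L a) \<le> ereal t * ?P y"
        by (rule ereal_mult_left_mono[OF Phi_ge[OF a]]) (use that in simp)
    qed
    finally show "ereal (L a ((1 - t) *\<^sub>R x + t *\<^sub>R y) - qf L a)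
        \<le> ereal (1 - t) * ?P x + ereal t * ?P y" .
  qed
  have proper: "proper_convex ?P"
    unfolding proper_convex_def
  proof (intro conjI allI impI)
    fix b show "?P b \<noteq> -\<infinity>" using geq[of b] by auto
  next
    show "\<exists>b. ?P b \<noteq> \<infinity>" using inA[OF a0] by (intro exI[of _ a0]) simp
  next
    fix x y :: 'b and t :: real
    assume "0 < t \<and> t < 1"
    thus "?P ((1 - t) *\<^sub>R x + t *\<^sub>R y) \<le> ereal (1 - t) * ?P x + ereal t * ?P y"
      using conv by blast
  qed
  have fge: "fenchel_L L ?P c \<ge> ?P c" for c
    unfolding PhiA_def[of L A c]
  proof (rule SUP_least)
    fix a assume a: "a \<in> A"
    have "ereal (L a c - qf L a) = ereal (L a c) - ?P a"
      using inA[OF a] by simp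
    also have "\<dots> \<le> fenchel_L L ?P c" unfolding fenchel_L_def
      by (rule SUP_upper) simp
    finally show "ereal (L a c - qf L a) \<le> fenchel_L L ?P c" .
  qed
  have finA: "fenchel_L L ?P c = ereal (qf L c)" if c: "c \<in> A" for c
  proof (rule antisym)
    show "fenchel_L L ?P c \<le> ereal (qf L c)" unfolding fenchel_L_def
    proof (rule SUP_least)
      fix b :: 'b
      have "ereal (L b c) - ?P b \<le> ereal (L b c) - ereal (L c b - qf L c)"
        by (rule ereal_minus_mono) (auto intro: Phi_ge[OF c])
      also have "\<dots> = ereal (qf L c)" using sym by simp
      finally show "ereal (L b c) - ?P b \<le> ereal (qf L c)" .
    qed
    show "ereal (qf L c) \<le> fenchel_L L ?P c" using fge[of c] inA[OF c] by simp
  qed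
  have "Pq L (fenchel_L L ?P) = A"
  proof
    show "Pq L (fenchel_L L ?P) \<subseteq> A"
    proof
      fix c assume "c \<in> Pq L (fenchel_L L ?P)"
      hence "fenchel_L L ?P c = ereal (qf L c)" unfolding Pq_def by simp
      hence "?P c \<le> ereal (qf L c)" using fge[of c] by simp
      thus "c \<in> A" using notA[of c] by force
    qed
    show "A \<subseteq> Pq L (fenchel_L L ?P)" unfolding Pq_def using finA by auto
  qed
  thus ?thesis using PqA proper fge geq unfolding BC_function_def by auto
qed

end
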